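(* Let $n\ge2$. Then \begin{align*} \zeta_{O_{2n}}(u)^{-1}=&(1-u^2)^{2n^2-4n}\bigl((2n-3)^2u^4+(4n-6)u^3+(4n-6)u^2+2u+1\bigr)^{n-1}\\ &\cdot\bigl((2n-3)u^2+1\bigr)\bigl((2n-3)u^2+(2-2n)u+1\bigr). \end{align*}
   Context: For $n\ge2$, the cocktail party graph $O_{2n}$ is the simple graph on $2n$ vertices that is the complement of a perfect matching (equivalently the complete multipartite graph $K_{2,2,\dots,2}$ with $n$ parts of size $2$). For a finite connected graph $G$ with vertex set $V$, edge set $E$ and no vertex of degree $1$, let $r=|E|-|V|+1$, $\mathcal{A}$ the adjacency matrix, $\mathcal{Q}=D-I$ with $D$ the diagonal degree matrix; the reciprocal Ihara zeta function is $\zeta_G(u)^{-1}=(1-u^2)^{r-1}\det(I-\mathcal{A}u+\mathcal{Q}u^2)$. *)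

theory Defs
  imports "Jordan_Normal_Form.Determinant"
begin

text \<open>A finite simple graph on the vertex set {0..<N}, given by a symmetric irreflexive
  adjacency relation E (only its restriction to {0..<N} matters).\<close>

definition num_edges :: "nat \<Rightarrow> (nat \<Rightarrow> nat \<Rightarrow> bool) \<Rightarrow> nat" where
  "num_edges N E = card {(i, j). i < j \<and> j < N \<and> E i j}"

definition degree :: "nat \<Rightarrow> (nat \<Rightarrow> nat \<Rightarrow> bool) \<Rightarrow> nat \<Rightarrow> nat" where
  "degree N E i = card {j. j < N \<and> E i j}"

definition adj_mat :: "nat \<Rightarrow> (nat \<Rightarrow> nat \<Rightarrow> bool) \<Rightarrow> real mat" where
  "adj_mat N E = mat N N (\<lambda>(i, j). if E i j then 1 else 0)"

definition Q_mat :: "nat \<Rightarrow> (nat \<Rightarrow> nat \<Rightarrow> bool) \<Rightarrow> real mat" where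
  "Q_mat N E = mat N N (\<lambda>(i, j). if i = j then real (degree N E i) - 1 else 0)"

text \<open>Reciprocal Ihara zeta function:
  (1-u^2)^(r-1) det(I - A u + Q u^2), with r = |E| - |V| + 1, so r - 1 = |E| - |V|.\<close>
definition ihara_zeta_inv :: "nat \<Rightarrow> (nat \<Rightarrow> nat \<Rightarrow> bool) \<Rightarrow> real \<Rightarrow> real" where
  "ihara_zeta_inv N E u =
     (1 - u^2) powi (int (num_edges N E) - int N) *
     det (1\<^sub>m N - u \<cdot>\<^sub>m adj_mat N E + (u^2) \<cdot>\<^sub>m Q_mat N E)"

text \<open>Cocktail party graph O_{2n} on vertices {0..<2n}: complement of the perfect matching
  {{2k, 2k+1}}.\<close>
definition cocktail_party :: "nat \<Rightarrow> nat \<Rightarrow> bool" where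
  "cocktail_party i j = (i \<noteq> j \<and> i div 2 \<noteq> j div 2)"

end

theory Submission
  imports Defs
begin

lemma mult_entry: "A \<in> carrier_mat N N \<Longrightarrow> B \<in> carrier_mat N N \<Longrightarrow> i < N \<Longrightarrow> j < N \<Longrightarrow>
  (A * B) $$ (i,j) = (\<Sum>k<N. A $$ (i,k) * B $$ (k,j))"
  by (simp add: scalar_prod_def lessThan_atLeast0)

lemma sum_pairs: "(\<Sum>m<2*n. f m) = (\<Sum>k<(n::nat). f (2*k) + f (2*k+1)::real)"
  by (induction n) (simp_all add: sum.distrib)

lemma prod_pairs: "(\<Prod>m<2*n. f m) = (\<Prod>k<(n::nat). f (2*k) * f (2*k+1)::real)"
  by (induction n) (simp_all add: mult.assoc)

lemma prod_list_upt: "prod_list (map f [0..<N]) = (\<Prod>m<N. f m::real)"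
  by (induction N) simp_all

lemma delta_sum: "(\<Sum>k<N. f k * (if k = a then 1 else 0)) = (if a < (N::nat) then f a else (0::real))"
proof -
  have "(\<Sum>k<N. f k * (if k = a then 1 else 0)) = (\<Sum>k<N. if k = a then f a else 0)"
    by (rule sum.cong) auto
  then show ?thesis by simp
qed

lemma delta_sum': "(\<Sum>k<N. (if k = a then 1 else 0) * f k) = (if a < (N::nat) then f a else (0::real))"
  using delta_sum[of f a N] by (simp add: mult.commute)

definition al :: "nat \<Rightarrow> real \<Rightarrow> real" where "al n u = 1 + (2*real n - 3)*u^2"

definition Mm :: "nat \<Rightarrow> real \<Rightarrow> real mat" where
  "Mm n u = mat (2*n) (2*n) (\<lambda>(i,j). if i = j then al n u else if i div 2 = j div 2 then 0 else -u)"

definition sS :: "nat \<Rightarrow> nat \<Rightarrow> real" where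
  "sS i j = (if j = 0 then 1 else if odd j then (if i = j - 1 then 1 else 0) - (if i = j then 1 else 0)
     else (if i = j then 1 else 0) + (if i = j+1 then 1 else 0) - (if i = 0 then 1 else 0) - (if i = 1 then 1 else 0))"

definition lam :: "nat \<Rightarrow> real \<Rightarrow> nat \<Rightarrow> real" where
  "lam n u j = (if j = 0 then al n u - (2*real n - 2)*u else if odd j then al n u else al n u + 2*u)"

lemma rowsum:
  assumes i: "i < 2*n"
  shows "(\<Sum>k<2*n. Mm n u $$ (i,k)) = al n u - (2*real n - 2)*u"
proof -
  have "(\<Sum>k<2*n. Mm n u $$ (i,k)) = (\<Sum>k<n. Mm n u $$ (i,2*k) + Mm n u $$ (i,2*k+1))"
    by (rule sum_pairs)
  also have "\<dots> = (\<Sum>k<n. (if k = i div 2 then al n u + 2*u else 0) - 2*u)"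
  proof (rule sum.cong)
    fix k assume "k \<in> {..<n}"
    then have k: "k < n" by simp
    show "Mm n u $$ (i,2*k) + Mm n u $$ (i,2*k+1) = (if k = i div 2 then al n u + 2*u else 0) - 2*u"
      using i k by (auto simp: Mm_def)
  qed simp
  also have "\<dots> = al n u + 2*u - 2*u*real n"
    using i by (simp add: sum_subtractf sum.delta)
  finally show ?thesis by (simp add: algebra_simps)
qed


lemma Mm_entry: "i < 2*n \<Longrightarrow> j < 2*n \<Longrightarrow>
  Mm n u $$ (i,j) = (if i = j then al n u else if i div 2 = j div 2 then 0 else -u)"
  by (simp add: Mm_def)

lemma pair_cases: "i div 2 = k \<Longrightarrow> i = 2*k \<or> i = 2*k+(1::nat)" by presburger

lemma MS_entry:
  assumes i: "i < 2*n" and j: "j < 2*n"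
  shows "(\<Sum>k<2*n. Mm n u $$ (i,k) * sS k j) = sS i j * lam n u j"
proof -
  let ?M = "\<lambda>k. Mm n u $$ (i,k)"
  consider "j = 0" | "odd j" | "j \<noteq> 0" "even j" by blast
  then show ?thesis
  proof cases
    case 1
    then show ?thesis using rowsum[OF i] by (simp add: sS_def lam_def)
  next
    case 2
    then obtain k where jk: "j = 2*k+1" by (metis oddE)
    have "(\<Sum>k<2*n. ?M k * sS k j) = (\<Sum>k<2*n. ?M k * (if k = j - 1 then 1 else 0) - ?M k * (if k = j then 1 else 0))"
      using 2 by (intro sum.cong) (auto simp: sS_def right_diff_distrib)
    also have "\<dots> = ?M (2*k) - ?M (2*k+1)" using j jk by (simp add: sum_subtractf delta_sum)
    also have "\<dots> = sS i j * lam n u j"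
    proof -
      have l: "lam n u j = al n u" using 2 jk by (simp add: lam_def)
      have e: "?M (2*k) = (if i = 2*k then al n u else if i div 2 = k then 0 else -u)"
              "?M (2*k+1) = (if i = 2*k+1 then al n u else if i div 2 = k then 0 else -u)"
        using i j jk by (simp_all add: Mm_entry)
      show ?thesis
      proof (cases "i div 2 = k")
        case True
        then consider "i = 2*k" | "i = 2*k+1" using pair_cases by blast
        then show ?thesis using e l jk by cases (simp_all add: sS_def)
      next
        case False
        then have "i \<noteq> 2*k" "i \<noteq> 2*k+1" by auto
        then show ?thesis using e l jk False by (simp add: sS_def)
      qed
    qed
    finally show ?thesis .
  next
    case 3
    have j1: "j + 1 < 2*n" using j 3 by presburger
    obtain k where jk: "j = 2*k" "k \<noteq> 0" using 3 by (metis evenE mult_0_right)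
    have "(\<Sum>k<2*n. ?M k * sS k j) = (\<Sum>k<2*n. ?M k * (if k = j then 1 else 0) + ?M k * (if k = j+1 then 1 else 0)
       - ?M k * (if k = 0 then 1 else 0) - ?M k * (if k = 1 then 1 else 0))"
      using 3 by (intro sum.cong) (auto simp: sS_def algebra_simps)
    also have "\<dots> = ?M j + ?M (j+1) - ?M 0 - ?M 1" using j j1 3
      apply (simp only: sum_subtractf sum.distrib delta_sum[of ?M] if_True)
      using j1 by simp
    also have "\<dots> = sS i j * lam n u j"
    proof -
      have l: "lam n u j = al n u + 2*u" using 3 by (simp add: lam_def)
      have e: "?M (2*k) + ?M (2*k+1) = (if i div 2 = k then al n u else -2*u)"
        using i j1 jk pair_cases[of i k] by (auto simp: Mm_entry)
      have e0: "?M 0 + ?M 1 = (if i div 2 = 0 then al n u else -2*u)"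
        using i j1 jk pair_cases[of i 0] by (auto simp: Mm_entry)
      have s: "sS i j = (if i div 2 = k then 1 else 0) - (if i div 2 = 0 then 1 else 0)"
        using jk pair_cases[of i k] pair_cases[of i 0] by (auto simp: sS_def)
      have f: "?M (2*k) + ?M (2*k+1) - ?M 0 - ?M 1 = ((if i div 2 = k then 1 else 0) - (if i div 2 = 0 then 1 else 0)) * (al n u + 2*u)"
        using e e0 jk(2) by (auto simp: algebra_simps)
      show ?thesis using f s l jk(1) by simp
    qed
    finally show ?thesis .
  qed
qed

lemma col_sum:
  assumes j: "j < 2*n"
  shows "(\<Sum>i<2*n. sS i j * x i) = (if j = 0 then (\<Sum>i<2*n. x i) else if odd j then x (j-1) - x j
     else x j + x (j+1) - x 0 - x 1)"
proof -
  consider "j = 0" | "odd j" | "j \<noteq> 0" "even j" by blast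
  then show ?thesis
  proof cases
    case 1 then show ?thesis by (simp add: sS_def)
  next
    case 2
    have "(\<Sum>i<2*n. sS i j * x i) = (\<Sum>i<2*n. (if i = j - 1 then 1 else 0) * x i - (if i = j then 1 else 0) * x i)"
      using 2 by (intro sum.cong) (auto simp: sS_def)
    also have "\<dots> = x (j-1) - x j" using j
      apply (simp only: sum_subtractf delta_sum'[of _ x])
      by simp
    moreover have "j \<noteq> 0" using 2 by presburger
    ultimately show ?thesis using 2 by simp
  next
    case 3
    have j1: "j + 1 < 2*n" using j 3 by presburger
    have "(\<Sum>i<2*n. sS i j * x i) = (\<Sum>i<2*n. (if i = j then 1 else 0) * x i + (if i = j+1 then 1 else 0) * x i
       - (if i = 0 then 1 else 0) * x i - (if i = 1 then 1 else 0) * x i)"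
      using 3 by (intro sum.cong) (auto simp: sS_def algebra_simps)
    also have "\<dots> = x j + x (j+1) - x 0 - x 1"
      apply (simp only: sum_subtractf sum.distrib delta_sum'[of _ x] if_True)
      using j1 by simp
    finally show ?thesis using 3 by simp
  qed
qed

definition Sm :: "nat \<Rightarrow> real mat" where "Sm n = mat (2*n) (2*n) (\<lambda>(i,j). sS i j)"

lemma det_S_nz:
  assumes n: "n \<ge> 1"
  shows "det (Sm n) \<noteq> 0"
proof
  assume "det (Sm n) = 0"
  then have "det (transpose_mat (Sm n)) = 0"
    by (subst det_transpose[of _ "2*n"]) (auto simp: Sm_def)
  then obtain v where v: "v \<in> carrier_vec (2*n)" "v \<noteq> 0\<^sub>v (2*n)" "transpose_mat (Sm n) *\<^sub>v v = 0\<^sub>v (2*n)"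
    using det_0_iff_vec_prod_zero_field[of "transpose_mat (Sm n)" "2*n"] by (auto simp: Sm_def)
  have eq: "(\<Sum>i<2*n. sS i j * v$i) = 0" if j: "j < 2*n" for j
  proof -
    have "(transpose_mat (Sm n) *\<^sub>v v) $ j = 0" using v(3) j by simp
    then show ?thesis using j v(1) by (simp add: Sm_def scalar_prod_def lessThan_atLeast0 row_def col_def)
  qed
  have all: "v $ i = v $ 0" if i: "i < 2*n" for i
  proof -
    have ii: "2*(i div 2)+1 < 2*n" using i by presburger
    have p: "v $ (2*(i div 2)) = v $ (2*(i div 2)+1)"
      using ii eq[of "2*(i div 2)+1"] col_sum[of "2*(i div 2)+1" n "\<lambda>i. v$i"] i by simp
    have p0: "v $ 0 = v $ 1" using eq[of 1] col_sum[of 1 n "\<lambda>i. v$i"] n by simp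
    have "v $ (2*(i div 2)) = v $ 0"
    proof (cases "i div 2 = 0")
      case True then show ?thesis by simp
    next
      case False
      have "2*(i div 2) + 1 < 2*n" using i by presburger
      then show ?thesis using eq[of "2*(i div 2)"] col_sum[of "2*(i div 2)" n "\<lambda>i. v$i"] False p p0 by simp
    qed
    moreover have "i = 2*(i div 2) \<or> i = 2*(i div 2)+1" by presburger
    ultimately show ?thesis using p by auto
  qed
  have "(\<Sum>i<2*n. v$i) = 0" using eq[of 0] col_sum[of 0 n "\<lambda>i. v$i"] n by simp
  also have "(\<Sum>i<2*n. v$i) = (\<Sum>i<2*n. v$0)" by (meson all lessThan_iff sum.cong)
  finally have "v$0 = 0" using n by simp
  then have z: "\<And>i. i < 2*n \<Longrightarrow> v$i = 0" using all by metis
  have "v = 0\<^sub>v (2*n)" using z v(1) by (intro eq_vecI) auto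
  with v(2) show False by simp
qed


lemma det_Mm:
  assumes n: "n \<ge> 1"
  shows "det (Mm n u) = (\<Prod>j<2*n. lam n u j)"
proof -
  define D where "D = mat (2*n) (2*n) (\<lambda>(i,j). if i = j then lam n u j else 0)"
  have cM: "Mm n u \<in> carrier_mat (2*n) (2*n)" and cS: "Sm n \<in> carrier_mat (2*n) (2*n)"
    and cD: "D \<in> carrier_mat (2*n) (2*n)" by (auto simp: Mm_def Sm_def D_def)
  have MS: "Mm n u * Sm n = Sm n * D"
  proof (rule eq_matI)
    fix i j assume i: "i < dim_row (Sm n * D)" and j: "j < dim_col (Sm n * D)"
    then have i': "i < 2*n" and j': "j < 2*n" using cS cD by auto
    have "(Mm n u * Sm n) $$ (i,j) = (\<Sum>k<2*n. Mm n u $$ (i,k) * sS k j)"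
      using mult_entry[OF cM cS i' j'] j' by (intro trans[OF mult_entry[OF cM cS i' j']] sum.cong) (auto simp: Sm_def)
    also have "\<dots> = sS i j * lam n u j" by (rule MS_entry[OF i' j'])
    also have "\<dots> = (\<Sum>k<2*n. sS i k * D $$ (k,j))"
    proof -
      have "(\<Sum>k<2*n. sS i k * D $$ (k,j)) = (\<Sum>k<2*n. if k = j then sS i j * lam n u j else 0)"
        using j' by (intro sum.cong) (auto simp: D_def)
      then show ?thesis using j' by simp
    qed
    also have "\<dots> = (Sm n * D) $$ (i,j)"
      using i' j' by (intro sym[OF trans[OF mult_entry[OF cS cD i' j']]] sum.cong) (auto simp: Sm_def)
    finally show "(Mm n u * Sm n) $$ (i,j) = (Sm n * D) $$ (i,j)" .
  qed (use cM cS cD in auto)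
  have "det (Mm n u) * det (Sm n) = det (Sm n) * det D"
    using MS det_mult[OF cM cS] det_mult[OF cS cD] by metis
  then have "det (Mm n u) = det D" using det_S_nz[OF n] by simp
  also have "det D = prod_list (diag_mat D)"
    by (rule det_upper_triangular[OF _ cD]) (auto simp: upper_triangular_def D_def)
  also have "\<dots> = (\<Prod>j<2*n. lam n u j)"
    unfolding diag_mat_def prod_list_upt using cD by (intro prod.cong) (auto simp: D_def)
  finally show ?thesis .
qed

lemma prod_lam:
  assumes n: "n \<ge> 1"
  shows "(\<Prod>j<2*n. lam n u j) = lam n u 0 * al n u * (al n u * (al n u + 2*u))^(n-1)"
proof -
  obtain m where m: "n = Suc m" using n by (cases n) auto
  have "(\<Prod>j<2*n. lam n u j) = (\<Prod>k<n. lam n u (2*k) * lam n u (2*k+1))" by (rule prod_pairs)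
  also have "\<dots> = lam n u 0 * lam n u 1 * (\<Prod>k<m. lam n u (2*Suc k) * lam n u (2*Suc k+1))"
    unfolding m by (simp add: prod.lessThan_Suc_shift del: prod.lessThan_Suc)
  also have "(\<Prod>k<m. lam n u (2*Suc k) * lam n u (2*Suc k+1)) = (\<Prod>k<m. al n u * (al n u + 2*u))"
    by (intro prod.cong) (auto simp: lam_def)
  finally show ?thesis using m by (simp add: lam_def)
qed

lemma degree_cp: assumes i: "i < 2*n" shows "degree (2*n) cocktail_party i = 2*n - 2"
proof -
  have "{j. j < 2*n \<and> cocktail_party i j} = {..<2*n} - {2*(i div 2), 2*(i div 2)+1}"
    unfolding cocktail_party_def by (auto; presburger)
  moreover have "{2*(i div 2), 2*(i div 2)+1} \<subseteq> {..<2*n}" using i by (auto; presburger)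
  ultimately show ?thesis unfolding degree_def by (simp add: card_Diff_subset)
qed

lemma sum_edges: "(\<Sum>j<2*n. 2*(j div 2)) = 2*n*n - 2*(n::nat)"
proof (induction n)
  case 0 then show ?case by simp
next
  case (Suc n)
  have "(\<Sum>j<2*Suc n. 2*(j div 2)) = (\<Sum>j<2*n. 2*(j div 2)) + 4*n" by simp
  then show ?case using Suc by (simp add: algebra_simps)
qed

lemma edges_cp: "num_edges (2*n) cocktail_party = 2*n*n - 2*n"
proof -
  have "{(i, j). i < j \<and> j < 2*n \<and> cocktail_party i j} = (\<lambda>(j,i). (i,j)) ` (SIGMA j:{..<2*n}. {..<2*(j div 2)})"
    unfolding cocktail_party_def by (auto simp: image_iff; presburger)
  moreover have "inj_on (\<lambda>(j,i). (i,j)) (SIGMA j:{..<2*n}. {..<2*(j div (2::nat))})"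
    by (auto simp: inj_on_def)
  ultimately have "num_edges (2*n) cocktail_party = (\<Sum>j<2*n. 2*(j div 2))"
    unfolding num_edges_def by (simp add: card_image)
  then show ?thesis using sum_edges by simp
qed


lemma mat_eq:
  assumes n: "n \<ge> 1"
  shows "1\<^sub>m (2*n) - u \<cdot>\<^sub>m adj_mat (2*n) cocktail_party + (u^2) \<cdot>\<^sub>m Q_mat (2*n) cocktail_party = Mm n u"
proof (rule eq_matI)
  fix i j assume i: "i < dim_row (Mm n u)" and j: "j < dim_col (Mm n u)"
  then have i': "i < 2*n" and j': "j < 2*n" by (auto simp: Mm_def)
  have d: "real (degree (2*n) cocktail_party i) = 2*real n - 2"
    using degree_cp[OF i'] n by (simp add: of_nat_diff)
  show "(1\<^sub>m (2*n) - u \<cdot>\<^sub>m adj_mat (2*n) cocktail_party + (u^2) \<cdot>\<^sub>m Q_mat (2*n) cocktail_party) $$ (i,j) = Mm n u $$ (i,j)"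
  proof (cases "i = j")
    case True
    have "(1\<^sub>m (2*n) - u \<cdot>\<^sub>m adj_mat (2*n) cocktail_party + (u^2) \<cdot>\<^sub>m Q_mat (2*n) cocktail_party) $$ (i,j)
       = 1 + u^2 * (real (degree (2*n) cocktail_party i) - 1)"
      using i' j' True by (simp add: adj_mat_def Q_mat_def cocktail_party_def)
    also have "\<dots> = Mm n u $$ (i,j)" unfolding d using i' j' True by (simp add: Mm_def al_def algebra_simps)
    finally show ?thesis .
  next
    case False
    then show ?thesis using i' j' by (simp add: adj_mat_def Q_mat_def Mm_def cocktail_party_def)
  qed
qed (auto simp: Mm_def adj_mat_def Q_mat_def)

theorem mainTheorem12:
  fixes n :: nat and u :: real
  assumes "n \<ge> 2"
  shows "ihara_zeta_inv (2 * n) cocktail_party u =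
    (1 - u^2) ^ (2 * n^2 - 4 * n) *
    ((2 * real n - 3)^2 * u^4 + (4 * real n - 6) * u^3 + (4 * real n - 6) * u^2 + 2 * u + 1) ^ (n - 1) *
    ((2 * real n - 3) * u^2 + 1) *
    ((2 * real n - 3) * u^2 + (2 - 2 * real n) * u + 1)"
proof -
  have n1: "n \<ge> 1" using assms by simp
  have e: "int (num_edges (2*n) cocktail_party) - int (2*n) = int (2*n^2 - 4*n)"
  proof -
    have "4*n \<le> 2*n*n" using assms by (simp add: mult_le_mono)
    then show ?thesis unfolding edges_cp by (simp add: power2_eq_square of_nat_diff algebra_simps)
  qed
  have q: "(2 * real n - 3)^2 * u^4 + (4 * real n - 6) * u^3 + (4 * real n - 6) * u^2 + 2 * u + 1
      = al n u * (al n u + 2*u)"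
    by (simp add: al_def power2_eq_square power3_eq_cube algebra_simps)
      (simp add: power_def numeral_eq_Suc algebra_simps)
  have "ihara_zeta_inv (2 * n) cocktail_party u = (1 - u^2) ^ (2 * n^2 - 4 * n) * det (Mm n u)"
    unfolding ihara_zeta_inv_def mat_eq[OF n1] e by simp
  also have "\<dots> = (1 - u^2) ^ (2 * n^2 - 4 * n) * (lam n u 0 * al n u * (al n u * (al n u + 2*u))^(n-1))"
    using det_Mm[OF n1] prod_lam[OF n1] by simp
  finally show ?thesis unfolding q by (simp add: lam_def al_def algebra_simps)
qed

end
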